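(* Consider the following insertion-only procedure for maintaining a coloring of a set $S$ of objects, where $S$ is partitioned into sets $S_0,\ldots,S_\ell$, $\ell=\lceil\log n\rceil$, each in one of the states empty, full, or in migration, and where for each $i$ there are $\ell-i+1$ color sets $C(i,t)$, $0\le t\le \ell-i$, each of $\gamma_{\mathrm{um}}(2^i)$ colors. To insert an object $s$: (1) let $i$ be the smallest index with $S_i$ empty (if $i=\ell+1$ a new set is introduced and $\ell$ is redefined); (2) set $S_i:=\{s\}\cup S_0\cup\cdots\cup S_{i-1}$, mark $S_0,\ldots,S_{i-1}$ empty and $S_i$ in migration; (3) take an unused color set $C(i,t)$ and compute a unimax coloring of $S_i$ with it, whose colors are called final colors; only $s$ is given its final color now; (4) for each set $S_k$ in migration, recolor to its final color one object of $S_k$ whose current color differs from its final color and whose final color is maximal among such objects; if all objects of $S_k$ now have their final color, mark $S_k$ full. Then in step (3), at least one of the color sets $C(i,t)$ with $0\le t\le\ell-i$ is currently unused (i.e., not currently assigned as the color of any object of $S$).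
   Context: Initially $S$ is empty and all sets are empty. A unimax coloring of a set of objects (regions with respect to points, or points with respect to ranges) is a coloring by integers such that for every point (resp. range) $q$ related to at least one object, the maximum color among the objects related to $q$ is attained by exactly one of them. $\gamma_{\mathrm{um}}$ is a non-decreasing function such that every $m$ objects of the family admit a unimax coloring with $\gamma_{\mathrm{um}}(m)$ colors. *)

theory Defs
  imports Main
begin

definition unimax :: "('q \<Rightarrow> 'x \<Rightarrow> bool) \<Rightarrow> 'x set \<Rightarrow> ('x \<Rightarrow> nat) \<Rightarrow> bool" where
  "unimax R X f \<longleftrightarrow>
     (\<forall>q. (\<exists>x\<in>X. R q x) \<longrightarrow>
        (\<exists>x\<in>X. R q x \<and> (\<forall>y\<in>X. R q y \<and> y \<noteq> x \<longrightarrow> f y < f x)))"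

datatype status = Empty | Full | Migr

text \<open>A colour is a triple (i, t, c): the c-th colour (c < gamma(2^i)) of the colour set C(i,t).
  The order of colours inside a colour set is the order of c.\<close>
type_synonym color = "nat \<times> nat \<times> nat"

record 'x state =
  lev :: nat
  sets :: "nat \<Rightarrow> 'x set"
  status :: "nat \<Rightarrow> status"
  cur :: "'x \<Rightarrow> color"
  fin :: "'x \<Rightarrow> color"

definition objs :: "'x state \<Rightarrow> 'x set" where
  "objs st = (\<Union>j\<le>lev st. sets st j)"

definition used :: "'x state \<Rightarrow> nat \<Rightarrow> nat \<Rightarrow> bool" where
  "used st i t \<longleftrightarrow> (\<exists>x\<in>objs st. \<exists>c. cur st x = (i, t, c))"

definition init_state :: "nat \<Rightarrow> 'x state" where
  "init_state l0 = \<lparr>lev = l0, sets = (\<lambda>_. {}), status = (\<lambda>_. Empty),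
                    cur = (\<lambda>_. undefined), fin = (\<lambda>_. undefined)\<rparr>"

text \<open>Step (1): smallest index of an empty set (equals lev+1 if S_0..S_lev are non-empty).\<close>
definition first_empty :: "'x state \<Rightarrow> nat" where
  "first_empty st = (LEAST i. status st i = Empty)"

text \<open>One insertion of object s, as a (nondeterministic) relation between the state before
  and after: choice of an unused colour set C(i,t), of the unimax colouring, and of the
  objects recoloured in step (4) among those with maximal final colour.\<close>
definition ins :: "('q \<Rightarrow> 'x \<Rightarrow> bool) \<Rightarrow> (nat \<Rightarrow> nat) \<Rightarrow> 'x \<Rightarrow> 'x state \<Rightarrow> 'x state \<Rightarrow> bool" where
  "ins R \<gamma> s st st'' \<longleftrightarrow>
    (let i = first_empty st;
         L = max (lev st) i;
         Si = insert s (\<Union>j<i. sets st j);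
         sets' = (\<lambda>k. if k < i then {} else if k = i then Si else sets st k);
         status' = (\<lambda>k. if k < i then Empty else if k = i then Migr else status st k)
     in \<exists>t f pick.
          t \<le> L - i \<and> \<not> used st i t \<and>
          unimax R Si f \<and> f ` Si \<subseteq> {0..<\<gamma> (2 ^ i)} \<and>
          (let fin' = (\<lambda>x. if x \<in> Si then (i, t, f x) else fin st x);
               cur' = (cur st)(s := (i, t, f s));
               cur'' = (\<lambda>x. if (\<exists>k. pick k = Some x) then fin' x else cur' x)
           in (\<forall>k. (if status' k = Migr \<and> (\<exists>x\<in>sets' k. cur' x \<noteq> fin' x)
                    then (\<exists>x. pick k = Some x \<and> x \<in> sets' k \<and> cur' x \<noteq> fin' x \<and>
                             (\<forall>y\<in>sets' k. cur' y \<noteq> fin' y \<longrightarrow>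
                                 snd (snd (fin' y)) \<le> snd (snd (fin' x))))
                    else pick k = None)) \<and>
              st'' = \<lparr>lev = L, sets = sets',
                      status = (\<lambda>k. if status' k = Migr \<and> (\<forall>x\<in>sets' k. cur'' x = fin' x)
                                    then Full else status' k),
                      cur = cur'', fin = fin'\<rparr>))"

inductive reach :: "('q \<Rightarrow> 'x \<Rightarrow> bool) \<Rightarrow> (nat \<Rightarrow> nat) \<Rightarrow> nat \<Rightarrow> 'x state \<Rightarrow> bool"
  for R \<gamma> l0 where
  reach_init: "reach R \<gamma> l0 (init_state l0)"
| reach_step: "reach R \<gamma> l0 st \<Longrightarrow> s \<notin> objs st \<Longrightarrow> ins R \<gamma> s st st' \<Longrightarrow> reach R \<gamma> l0 st'"

end

theory Submission
  imports Defs
begin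

definition low :: "'x state \<Rightarrow> nat \<Rightarrow> 'x set" where
  "low st k = (\<Union>j<k. sets st j)"
definition rem :: "'x state \<Rightarrow> nat \<Rightarrow> 'x set" where
  "rem st k = {x \<in> sets st k. cur st x \<noteq> fin st x}"
definition good :: "'x state \<Rightarrow> nat \<Rightarrow> (nat \<Rightarrow> nat) \<Rightarrow> bool" where
  "good st k \<tau> \<longleftrightarrow> (\<forall>x\<in>sets st k. (\<exists>c. fin st x = (k, \<tau> k, c)) \<and>
      (\<exists>j\<le>k. \<exists>c. cur st x = (j, \<tau> j, c)) \<and> (status st k = Full \<longrightarrow> cur st x = fin st x))"
definition inv :: "'x state \<Rightarrow> bool" where
  "inv st \<longleftrightarrow> (\<forall>k>lev st. status st k = Empty) \<and>
     (\<forall>k. status st k = Empty \<longleftrightarrow> sets st k = {}) \<and>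
     (\<forall>k. finite (sets st k)) \<and>
     (\<forall>k. sets st k \<noteq> {} \<longrightarrow> card (sets st k) = 2^k) \<and>
     (\<forall>j k. j \<noteq> k \<longrightarrow> sets st j \<inter> sets st k = {}) \<and>
     (\<forall>k. status st k \<noteq> Empty \<longrightarrow> (\<exists>\<tau>. good st k \<tau>)) \<and>
     (\<forall>k. status st k = Migr \<longrightarrow> rem st k \<noteq> {} \<and> card (rem st k) + card (low st k) \<le> 2^k - 1)"

lemma invD:
  assumes "inv st"
  shows "\<And>k. k > lev st \<Longrightarrow> status st k = Empty"
    "\<And>k. status st k = Empty \<longleftrightarrow> sets st k = {}"
    "\<And>k. finite (sets st k)"
    "\<And>k. sets st k \<noteq> {} \<Longrightarrow> card (sets st k) = 2^k"
    "\<And>j k. j \<noteq> k \<Longrightarrow> sets st j \<inter> sets st k = {}"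
    "\<And>k. status st k \<noteq> Empty \<Longrightarrow> (\<exists>\<tau>. good st k \<tau>)"
    "\<And>k. status st k = Migr \<Longrightarrow> rem st k \<noteq> {}"
    "\<And>k. status st k = Migr \<Longrightarrow> card (rem st k) + card (low st k) \<le> 2^k - 1"
  using assms unfolding inv_def by blast+

lemma card_low:
  assumes fin: "\<forall>k. finite (sets st k)" and cd: "\<forall>k. sets st k \<noteq> {} \<longrightarrow> card (sets st k) = 2^k"
   and dj: "\<forall>j k. j \<noteq> k \<longrightarrow> sets st j \<inter> sets st k = {}"
  shows "(\<forall>j<k. sets st j \<noteq> {}) \<Longrightarrow> card (low st k) = 2^k - 1"
proof (induction k)
  case 0 thus ?case by (simp add: low_def)
next
  case (Suc k)
  have e: "low st (Suc k) = low st k \<union> sets st k" by (auto simp: low_def lessThan_Suc)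
  have d: "low st k \<inter> sets st k = {}"
  proof -
    { fix x j assume "j<k" "x \<in> sets st j" "x \<in> sets st k"
      then have False using dj[rule_format, of j k] by auto }
    then show ?thesis by (auto simp: low_def)
  qed
  have fl: "finite (low st k)" using fin by (simp add: low_def)
  have "card (low st (Suc k)) = card (low st k) + card (sets st k)" by (simp add: card_Un_disjoint e d fl fin)
  also have "\<dots> = 2^k - 1 + 2^k" using Suc cd by simp
  also have "\<dots> = 2^Suc k - 1" using one_le_power[of 2 k] by simp
  finally show ?case .
qed

lemma fe_props:
  assumes "inv st"
  shows "status st (first_empty st) = Empty" "first_empty st \<le> Suc (lev st)"
    "\<And>j. j < first_empty st \<Longrightarrow> status st j \<noteq> Empty"
proof -
  have e: "status st (Suc (lev st)) = Empty" using assms by (simp add: inv_def)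
  show "status st (first_empty st) = Empty" unfolding first_empty_def by (rule LeastI, rule e)
  show "first_empty st \<le> Suc (lev st)" unfolding first_empty_def by (rule Least_le, rule e)
  show "\<And>j. j < first_empty st \<Longrightarrow> status st j \<noteq> Empty" unfolding first_empty_def
    by (rule not_less_Least)
qed

lemma full_below:
  assumes I: "inv st" and j: "j < first_empty st"
  shows "status st j = Full"
proof -
  have ne: "status st j \<noteq> Empty" using fe_props(3)[OF I j] .
  show ?thesis
  proof (cases "status st j")
    case Migr
    then have r: "rem st j \<noteq> {}" "card (rem st j) + card (low st j) \<le> 2^j - 1"
      using invD[OF I] by auto
    have "finite (rem st j)" using invD(3)[OF I] by (auto simp: rem_def)
    then have "card (rem st j) \<ge> 1" using r(1) by (simp add: Suc_le_eq card_gt_0_iff)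
    moreover have "card (low st j) = 2^j - 1"
      apply (rule card_low) using invD[OF I] fe_props(3)[OF I] j by auto
    ultimately show ?thesis using r(2) one_le_power[of 2 j] by simp
  qed (use ne in auto)
qed

lemma in_objs:
  assumes I: "inv st" and x: "x \<in> sets st j"
  shows "x \<in> objs st"
proof -
  have "status st j \<noteq> Empty" using invD(2)[OF I] x by auto
  then have "j \<le> lev st" using invD(1)[OF I] not_le by blast
  then show ?thesis using x by (auto simp: objs_def)
qed

lemma inv_init: "inv (init_state l0)"
  by (simp add: inv_def init_state_def rem_def low_def)

lemma inv_step:
  assumes I: "inv st" and sn: "s \<notin> objs st" and ins: "ins R \<gamma> s st st2"
  shows "inv st2"
proof -
  define i where "i = first_empty st"
  define L where "L = max (lev st) i"
  define Si where "Si = insert s (\<Union>j<i. sets st j)"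
  define sets' where "sets' = (\<lambda>k. if k < i then {} else if k = i then Si else sets st k)"
  define status' where "status' = (\<lambda>k. if k < i then Empty else if k = i then Migr else status st k)"
  have "\<exists>t f pick. t \<le> L - i \<and> \<not> used st i t \<and>
     (let fin' = (\<lambda>x. if x \<in> Si then (i, t, f x) else fin st x);
          cur' = (cur st)(s := (i, t, f s));
          cur'' = (\<lambda>x. if (\<exists>k. pick k = Some x) then fin' x else cur' x)
      in (\<forall>k. (if status' k = Migr \<and> (\<exists>x\<in>sets' k. cur' x \<noteq> fin' x)
                    then (\<exists>x. pick k = Some x \<and> x \<in> sets' k \<and> cur' x \<noteq> fin' x \<and>
                             (\<forall>y\<in>sets' k. cur' y \<noteq> fin' y \<longrightarrow>
                                 snd (snd (fin' y)) \<le> snd (snd (fin' x))))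
                    else pick k = None)) \<and>
              st2 = \<lparr>lev = L, sets = sets',
                      status = (\<lambda>k. if status' k = Migr \<and> (\<forall>x\<in>sets' k. cur'' x = fin' x)
                                    then Full else status' k),
                      cur = cur'', fin = fin'\<rparr>)"
    using ins unfolding ins_def Let_def i_def L_def Si_def sets'_def status'_def by blast
  then obtain t f pick where t: "t \<le> L - i" "\<not> used st i t" and H:
     "(let fin' = (\<lambda>x. if x \<in> Si then (i, t, f x) else fin st x);
          cur' = (cur st)(s := (i, t, f s));
          cur'' = (\<lambda>x. if (\<exists>k. pick k = Some x) then fin' x else cur' x)
      in (\<forall>k. (if status' k = Migr \<and> (\<exists>x\<in>sets' k. cur' x \<noteq> fin' x)
                    then (\<exists>x. pick k = Some x \<and> x \<in> sets' k \<and> cur' x \<noteq> fin' x \<and>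
                             (\<forall>y\<in>sets' k. cur' y \<noteq> fin' y \<longrightarrow>
                                 snd (snd (fin' y)) \<le> snd (snd (fin' x))))
                    else pick k = None)) \<and>
              st2 = \<lparr>lev = L, sets = sets',
                      status = (\<lambda>k. if status' k = Migr \<and> (\<forall>x\<in>sets' k. cur'' x = fin' x)
                                    then Full else status' k),
                      cur = cur'', fin = fin'\<rparr>)" by blast
  define fin' where "fin' = (\<lambda>x. if x \<in> Si then (i, t, f x) else fin st x)"
  define cur' where "cur' = (cur st)(s := (i, t, f s))"
  define cur'' where "cur'' = (\<lambda>x. if (\<exists>k. pick k = Some x) then fin' x else cur' x)"
  define status'' where "status'' = (\<lambda>k. if status' k = Migr \<and> (\<forall>x\<in>sets' k. cur'' x = fin' x)
                                    then Full else status' k)"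
  have H2: "(\<forall>k. (if status' k = Migr \<and> (\<exists>x\<in>sets' k. cur' x \<noteq> fin' x)
                    then (\<exists>x. pick k = Some x \<and> x \<in> sets' k \<and> cur' x \<noteq> fin' x \<and>
                             (\<forall>y\<in>sets' k. cur' y \<noteq> fin' y \<longrightarrow>
                                 snd (snd (fin' y)) \<le> snd (snd (fin' x))))
                    else pick k = None)) \<and>
              st2 = \<lparr>lev = L, sets = sets', status = status'', cur = cur'', fin = fin'\<rparr>"
    using H unfolding Let_def fin'_def cur'_def cur''_def status''_def .
  have pk: "\<And>k. status' k = Migr \<Longrightarrow> (\<exists>x\<in>sets' k. cur' x \<noteq> fin' x) \<Longrightarrow>
      \<exists>x. pick k = Some x \<and> x \<in> sets' k \<and> cur' x \<noteq> fin' x"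
    using H2 by (metis (no_types, lifting))
  have st2: "lev st2 = L" "sets st2 = sets'" "status st2 = status''" "cur st2 = cur''" "fin st2 = fin'"
    using H2 by auto
  have fe: "status st i = Empty" "i \<le> Suc (lev st)" "\<And>j. j < i \<Longrightarrow> status st j \<noteq> Empty"
    using fe_props[OF I] unfolding i_def by auto
  have si: "sets st i = {}" using fe(1) invD(2)[OF I] by auto
  have sj: "\<And>j. j < i \<Longrightarrow> sets st j \<noteq> {}" using fe(3) invD(2)[OF I] by auto
  have fj: "\<And>j. j < i \<Longrightarrow> status st j = Full" using full_below[OF I] unfolding i_def by auto
  have sk: "\<And>k. s \<notin> sets st k" using in_objs[OF I] sn by blast
  have lowi: "(\<Union>j<i. sets st j) = low st i" by (simp add: low_def)
  have flow: "\<And>k. finite (low st k)" using invD(3)[OF I] by (simp add: low_def)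
  have clow: "card (low st i) = 2^i - 1" by (rule card_low) (use invD[OF I] sj in auto)
  have snl: "\<And>k. s \<notin> low st k" using sk by (auto simp: low_def)
  have cSi: "card Si = 2^i" unfolding Si_def lowi using clow flow snl one_le_power[of 2 i] by simp
  have fSi: "finite Si" unfolding Si_def lowi using flow by simp
  have disj: "\<And>k. i < k \<Longrightarrow> Si \<inter> sets st k = {}"
  proof -
    fix k assume "i < k"
    { fix x j assume "j<i" "x \<in> sets st j" "x \<in> sets st k"
      then have False using invD(5)[OF I, of j k] \<open>i < k\<close> by auto }
    then show "Si \<inter> sets st k = {}" unfolding Si_def using sk by blast
  qed
  have nu: "\<And>x c. x \<in> objs st \<Longrightarrow> cur st x \<noteq> (i, t, c)" using t(2) unfolding used_def by blast
  have F6: "\<And>k x. i < k \<Longrightarrow> x \<in> sets st k \<Longrightarrow> fin' x = fin st x \<and> cur' x = cur st x"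
    using disj sk unfolding fin'_def cur'_def by auto
  have F7: "cur' s = fin' s" unfolding cur'_def fin'_def Si_def by simp
  have F8: "\<And>x. x \<in> Si \<Longrightarrow> x \<noteq> s \<Longrightarrow> cur' x \<noteq> fin' x"
  proof -
    fix x assume x: "x \<in> Si" "x \<noteq> s"
    then obtain j where "j < i" "x \<in> sets st j" unfolding Si_def by auto
    then have "x \<in> objs st" using in_objs[OF I] by blast
    then show "cur' x \<noteq> fin' x" using nu x unfolding cur'_def fin'_def by auto
  qed
  have picked: "\<And>x k. pick k = Some x \<Longrightarrow> cur'' x = fin' x" unfolding cur''_def by auto
  have c2: "\<And>x. cur'' x = fin' x \<or> cur'' x = cur' x" unfolding cur''_def by auto
  have st''E: "\<And>k. status'' k = Empty \<longleftrightarrow> status' k = Empty"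
    unfolding status''_def by auto
  have A: "\<forall>k>lev st2. status st2 k = Empty"
  proof (intro allI impI)
    fix k assume "lev st2 < k"
    then have "i < k" "lev st < k" using st2(1) unfolding L_def by auto
    then show "status st2 k = Empty" using invD(1)[OF I] st''E st2(3) unfolding status'_def by auto
  qed
  have B: "\<forall>k. status st2 k = Empty \<longleftrightarrow> sets st2 k = {}"
    using st''E invD(2)[OF I] st2 unfolding status'_def sets'_def Si_def by auto
  have C: "\<forall>k. finite (sets st2 k)"
    using invD(3)[OF I] fSi st2 unfolding sets'_def by auto
  have D: "\<forall>k. sets st2 k \<noteq> {} \<longrightarrow> card (sets st2 k) = 2^k"
    using invD(4)[OF I] cSi st2 unfolding sets'_def by auto
  have E: "\<forall>j k. j \<noteq> k \<longrightarrow> sets st2 j \<inter> sets st2 k = {}"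
  proof (intro allI impI)
    fix j k :: nat assume "j \<noteq> k"
    then show "sets st2 j \<inter> sets st2 k = {}"
      using invD(5)[OF I, of j k] disj[of j] disj[of k] st2(2) unfolding sets'_def
      by (auto simp: Int_commute)
  qed
  have G: "\<forall>k. status st2 k \<noteq> Empty \<longrightarrow> (\<exists>\<tau>. good st2 k \<tau>)"
  proof (intro allI impI)
    fix k assume ne: "status st2 k \<noteq> Empty"
    then have ne': "status' k \<noteq> Empty" using st''E st2(3) by auto
    then have "\<not> k < i" unfolding status'_def by auto
    then consider "k = i" | "i < k" by linarith
    then show "\<exists>\<tau>. good st2 k \<tau>"
    proof cases
      case 2
      then have ne0: "status st k \<noteq> Empty" using ne' unfolding status'_def by auto
      then obtain \<tau> where g: "good st k \<tau>" using invD(6)[OF I] by blast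
      have "good st2 k \<tau>" unfolding good_def st2
      proof
        fix x assume "x \<in> sets' k"
        then have x: "x \<in> sets st k" using 2 unfolding sets'_def by auto
        have e: "fin' x = fin st x" "cur' x = cur st x" using F6[OF 2 x] by auto
        obtain c where fx: "fin st x = (k, \<tau> k, c)" using g x unfolding good_def by blast
        obtain j c' where cx: "j \<le> k" "cur st x = (j, \<tau> j, c')" using g x unfolding good_def by blast
        have "\<exists>j\<le>k. \<exists>c. cur'' x = (j, \<tau> j, c)"
          using c2[of x] e fx cx by auto
        moreover have "status'' k = Full \<longrightarrow> cur'' x = fin' x"
        proof
          assume F: "status'' k = Full"
          show "cur'' x = fin' x"
          proof (cases "status' k = Migr \<and> (\<forall>x\<in>sets' k. cur'' x = fin' x)")
            case True then show ?thesis using \<open>x \<in> sets' k\<close> by auto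
          next
            case False
            then have "status'' k = status' k" unfolding status''_def by (rule if_not_P)
            then have "status' k = Full" using F by simp
            then have "status st k = Full" using 2 unfolding status'_def by auto
            then have "cur st x = fin st x" using g x unfolding good_def by blast
            then show ?thesis using c2[of x] e by auto
          qed
        qed
        ultimately show "(\<exists>c. fin' x = (k, \<tau> k, c)) \<and> (\<exists>j\<le>k. \<exists>c. cur'' x = (j, \<tau> j, c)) \<and>
           (status'' k = Full \<longrightarrow> cur'' x = fin' x)" using e fx by auto
      qed
      then show ?thesis by blast
    next
      case 1
      define T where "T = (\<lambda>j. (SOME \<tau>. good st j \<tau>) j)"
      have gT: "\<And>j. j < i \<Longrightarrow> good st j (SOME \<tau>. good st j \<tau>)"
        using invD(6)[OF I] fe(3) by (metis someI_ex)
      define \<tau>' where "\<tau>' = (\<lambda>j. if j = i then t else T j)"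
      have "good st2 k \<tau>'" unfolding good_def st2
      proof
        fix x assume "x \<in> sets' k"
        then have x: "x \<in> Si" using 1 unfolding sets'_def by auto
        have fx: "fin' x = (k, \<tau>' k, f x)" using x 1 unfolding fin'_def \<tau>'_def by auto
        have "\<exists>j\<le>k. \<exists>c. cur'' x = (j, \<tau>' j, c)"
        proof (cases "cur'' x = fin' x")
          case True then show ?thesis using fx by auto
        next
          case False
          then have cx: "cur'' x = cur' x" using c2[of x] by auto
          show ?thesis
          proof (cases "x = s")
            case True then show ?thesis using cx 1 unfolding cur'_def \<tau>'_def by auto
          next
            case False
            then obtain j where j: "j < i" "x \<in> sets st j" using x unfolding Si_def by auto
            have g: "good st j (SOME \<tau>. good st j \<tau>)" using gT[OF j(1)] .
            have "status st j = Full" using fj[OF j(1)] .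
            then have "cur st x = fin st x" using g j(2) unfolding good_def by blast
            moreover obtain c where "fin st x = (j, T j, c)" using g j(2) unfolding good_def T_def by blast
            ultimately have "cur' x = (j, \<tau>' j, c)" using False j(1) unfolding cur'_def \<tau>'_def by auto
            then show ?thesis using cx j(1) 1 by (intro exI[of _ j]) auto
          qed
        qed
        moreover have "status'' k = Full \<longrightarrow> cur'' x = fin' x"
          using \<open>x \<in> sets' k\<close> 1 unfolding status''_def status'_def by auto
        ultimately show "(\<exists>c. fin' x = (k, \<tau>' k, c)) \<and> (\<exists>j\<le>k. \<exists>c. cur'' x = (j, \<tau>' j, c)) \<and>
           (status'' k = Full \<longrightarrow> cur'' x = fin' x)" using fx by auto
      qed
      then show ?thesis by blast
    qed
  qed
  have K: "\<forall>k. status st2 k = Migr \<longrightarrow> rem st2 k \<noteq> {} \<and> card (rem st2 k) + card (low st2 k) \<le> 2^k - 1"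
  proof (intro allI impI)
    fix k assume M: "status st2 k = Migr"
    have M': "status' k = Migr" "\<not> (\<forall>x\<in>sets' k. cur'' x = fin' x)"
      using M st2(3) unfolding status''_def by (auto split: if_splits)
    have r2: "rem st2 k = {x \<in> sets' k. cur'' x \<noteq> fin' x}" unfolding rem_def st2 ..
    have l2: "low st2 k = (\<Union>j<k. sets' j)" unfolding low_def st2 ..
    have rne: "rem st2 k \<noteq> {}" using M'(2) r2 by auto
    have "\<not> k < i" using M'(1) unfolding status'_def by auto
    then consider "k = i" | "i < k" by linarith
    then have "card (rem st2 k) + card (low st2 k) \<le> 2^k - 1"
    proof cases
      case 1
      have "low st2 k = {}" using l2 1 unfolding sets'_def by auto
      moreover have "rem st2 k \<subseteq> Si - {s}"
        using r2 1 F7 c2[of s] unfolding sets'_def by auto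
      then have "card (rem st2 k) \<le> card (Si - {s})" using fSi by (intro card_mono) auto
      moreover have "card (Si - {s}) = 2^i - 1" 
        proof -
          have "s \<in> Si" unfolding Si_def by simp
          then show ?thesis using cSi fSi by (simp add: card_Diff_singleton)
        qed
      ultimately show ?thesis using 1 by simp
    next
      case 2
      have Mk: "status st k = Migr" using M'(1) 2 unfolding status'_def by auto
      have rk: "rem st k \<noteq> {}" "card (rem st k) + card (low st k) \<le> 2^k - 1"
        using invD(7,8)[OF I Mk] by auto
      have frk: "finite (rem st k)" using invD(3)[OF I] unfolding rem_def by auto
      have eqr: "rem st k = {x \<in> sets' k. cur' x \<noteq> fin' x}"
        using F6[OF 2] 2 unfolding rem_def sets'_def by auto
      obtain p where p: "pick k = Some p" "p \<in> sets' k" "cur' p \<noteq> fin' p"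
        using pk[OF M'(1)] rk(1) eqr by auto
      have "rem st2 k \<subseteq> rem st k - {p}"
      proof
        fix x assume "x \<in> rem st2 k"
        then have x: "x \<in> sets' k" "cur'' x \<noteq> fin' x" using r2 by auto
        then have "cur'' x = cur' x" using c2[of x] by auto
        then show "x \<in> rem st k - {p}" using x eqr picked[OF p(1)] by auto
      qed
      moreover have "p \<in> rem st k" using p eqr by auto
      ultimately have cr: "card (rem st2 k) \<le> card (rem st k) - 1"
        using frk by (metis card_Diff_singleton card_mono finite_Diff)
      have "low st2 k = insert s (low st k)"
      proof
        show "low st2 k \<subseteq> insert s (low st k)"
          unfolding l2 unfolding low_def sets'_def Si_def using 2 by (auto split: if_splits)
        show "insert s (low st k) \<subseteq> low st2 k"
        proof
          fix x assume "x \<in> insert s (low st k)"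
          then consider "x = s" | j where "j < k" "x \<in> sets st j" unfolding low_def by auto
          then show "x \<in> low st2 k"
          proof cases
            case 1 then show ?thesis unfolding l2 sets'_def Si_def using 2 by auto
          next
            case (2 j)
            then consider "j < i" | "j = i" | "i < j" by linarith
            then show ?thesis
            proof cases
              case 1 then show ?thesis unfolding l2 sets'_def Si_def using 2 \<open>i < k\<close> by auto
            next
              case 2 then show ?thesis using si \<open>x \<in> sets st j\<close> by auto
            next
              case 3 then show ?thesis unfolding l2 sets'_def using 2 by auto
            qed
          qed
        qed
      qed
      then have "card (low st2 k) = card (low st k) + 1" using flow snl by simp
      moreover have "card (rem st k) \<ge> 1" using rk(1) frk by (simp add: Suc_le_eq card_gt_0_iff)
      ultimately show ?thesis using cr rk(2) by linarith
    qed
    then show "rem st2 k \<noteq> {} \<and> card (rem st2 k) + card (low st2 k) \<le> 2^k - 1" using rne by blast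
  qed
  show ?thesis unfolding inv_def using A B C D E G K by blast
qed

theorem mainTheorem9:
  fixes R :: "'q \<Rightarrow> 'o \<Rightarrow> bool" and \<gamma> :: "nat \<Rightarrow> nat" and l0 :: nat
    and st :: "'o state" and s :: 'o
  assumes "mono \<gamma>"
    and "\<And>X m. finite X \<Longrightarrow> card X = m \<Longrightarrow>
           \<exists>f. unimax R X f \<and> f ` X \<subseteq> {0..<\<gamma> m}"
    and "reach R \<gamma> l0 st"
    and "s \<notin> objs st"
  shows "\<exists>t \<le> max (lev st) (first_empty st) - first_empty st.
           \<not> used st (first_empty st) t"
proof -
  have I: "inv st" using assms(3)
  proof induction
    case reach_init then show ?case by (rule inv_init)
  next
    case (reach_step st s st') show ?case
      by (fact inv_step[OF reach_step.IH reach_step.hyps(2) reach_step.hyps(3)])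
  qed
  define i where "i = first_empty st"
  define L where "L = max (lev st) i"
  have fe: "status st i = Empty" using fe_props(1)[OF I] unfolding i_def .
  have si: "sets st i = {}" using fe invD(2)[OF I] by auto
  show ?thesis
  proof (rule ccontr)
    assume "\<not> ?thesis"
    then have U: "\<And>t. t \<le> L - i \<Longrightarrow> used st i t" unfolding i_def L_def by blast
    define g where "g = (\<lambda>k. (SOME \<tau>. good st k \<tau>) i)"
    have sub: "{0..L-i} \<subseteq> g ` {i<..lev st}"
    proof
      fix t assume "t \<in> {0..L-i}"
      then have "used st i t" using U by auto
      then obtain x c where x: "x \<in> objs st" "cur st x = (i, t, c)" unfolding used_def by blast
      then obtain k where k: "k \<le> lev st" "x \<in> sets st k" unfolding objs_def by auto
      then have ne: "status st k \<noteq> Empty" using invD(2)[OF I] by auto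
      then have "\<exists>\<tau>. good st k \<tau>" using invD(6)[OF I] by blast
      then have g: "good st k (SOME \<tau>. good st k \<tau>)" by (rule someI_ex)
      then obtain j c' where j: "j \<le> k" "cur st x = (j, (SOME \<tau>. good st k \<tau>) j, c')"
        using k(2) unfolding good_def by blast
      have ji: "j = i" "t = g k" using j x(2) unfolding g_def by auto
      have "k \<noteq> i" using si k(2) by auto
      moreover have "\<not> k < i"
      proof
        assume "k < i"
        then have "status st k = Full" using full_below[OF I] unfolding i_def by auto
        then have "cur st x = fin st x" using g k(2) unfolding good_def by blast
        moreover obtain c2 where "fin st x = (k, (SOME \<tau>. good st k \<tau>) k, c2)"
          using g k(2) unfolding good_def by blast
        ultimately show False using x(2) \<open>k < i\<close> by auto
      qed
      ultimately have "k \<in> {i<..lev st}" using k(1) by auto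
      then show "t \<in> g ` {i<..lev st}" using ji by auto
    qed
    have "card {0..L-i} \<le> card (g ` {i<..lev st})" using sub by (intro card_mono) auto
    also have "\<dots> \<le> card {i<..lev st}" by (rule card_image_le) auto
    finally have "L - i + 1 \<le> lev st - i" by simp
    then show False unfolding L_def by linarith
  qed
qed

end
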